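(* For any join doctrine $\Phi$, we have $\omega\in\Phi$ if and only if $\omega\notin\Phi^*$.
   Context: A join doctrine is a class $\Phi$ of posets such that: (1) the one-element poset is in $\Phi$; (2) if a poset $P$ is the union of a set $\mathcal{S}$ of subposets each in $\Phi$ and $\mathcal{S}$ (ordered by inclusion) is in $\Phi$, then $P\in\Phi$; (3) if $f:P\to Q$ is monotone with cofinal image and $P\in\Phi$ then $Q\in\Phi$; (4) cofinal subposets of members of $\Phi$ are in $\Phi$. $\omega$ = natural numbers with usual order. $\Phi^*$ is the class of posets $\psi$ such that whenever $\psi=\bigcup\mathcal{S}$ for a set $\mathcal{S}$ of lower subsets of $\psi$ with $\mathcal{S}$ (ordered by inclusion) belonging to $\Phi$, some member of $\mathcal{S}$ equals $\psi$ (i.e. $\psi$ is a $\Phi$-compact element of the lattice of lower subsets of $\psi$). *)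

theory Defs
  imports Main
begin

definition is_poset :: "'b set \<Rightarrow> ('b \<Rightarrow> 'b \<Rightarrow> bool) \<Rightarrow> bool" where
  "is_poset A le \<longleftrightarrow>
     (\<forall>x\<in>A. le x x) \<and>
     (\<forall>x\<in>A. \<forall>y\<in>A. le x y \<and> le y x \<longrightarrow> x = y) \<and>
     (\<forall>x\<in>A. \<forall>y\<in>A. \<forall>z\<in>A. le x y \<and> le y z \<longrightarrow> le x z)"

definition order_iso ::
  "('b \<Rightarrow> 'c) \<Rightarrow> 'b set \<Rightarrow> ('b \<Rightarrow> 'b \<Rightarrow> bool) \<Rightarrow> 'c set \<Rightarrow> ('c \<Rightarrow> 'c \<Rightarrow> bool) \<Rightarrow> bool" where
  "order_iso f A r B s \<longleftrightarrow> bij_betw f A B \<and> (\<forall>x\<in>A. \<forall>y\<in>A. r x y \<longleftrightarrow> s (f x) (f y))"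

text \<open>A class of posets is represented by a set Phi of posets whose carriers live in a
  fixed universe type 'u; a poset on an arbitrary type belongs to the class
  iff it is order-isomorphic to a member of Phi.\<close>

definition in_class ::
  "('u set \<times> ('u \<Rightarrow> 'u \<Rightarrow> bool)) set \<Rightarrow> 'b set \<Rightarrow> ('b \<Rightarrow> 'b \<Rightarrow> bool) \<Rightarrow> bool" where
  "in_class Phi A r \<longleftrightarrow> is_poset A r \<and>
     (\<exists>B s f. (B, s) \<in> Phi \<and> is_poset B s \<and> order_iso f A r B s)"

definition monotone_map ::
  "('b \<Rightarrow> 'c) \<Rightarrow> 'b set \<Rightarrow> ('b \<Rightarrow> 'b \<Rightarrow> bool) \<Rightarrow> 'c set \<Rightarrow> ('c \<Rightarrow> 'c \<Rightarrow> bool) \<Rightarrow> bool" where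
  "monotone_map f A r B s \<longleftrightarrow> f ` A \<subseteq> B \<and> (\<forall>x\<in>A. \<forall>y\<in>A. r x y \<longrightarrow> s (f x) (f y))"

definition cofinal :: "'c set \<Rightarrow> 'c set \<Rightarrow> ('c \<Rightarrow> 'c \<Rightarrow> bool) \<Rightarrow> bool" where
  "cofinal C B s \<longleftrightarrow> C \<subseteq> B \<and> (\<forall>y\<in>B. \<exists>x\<in>C. s y x)"

definition join_doctrine :: "('u set \<times> ('u \<Rightarrow> 'u \<Rightarrow> bool)) set \<Rightarrow> bool" where
  "join_doctrine Phi \<longleftrightarrow>
     \<comment> \<open>(1) the one-element poset is in Phi\<close>
     in_class Phi ({()} :: unit set) (\<lambda>_ _. True) \<and>
     \<comment> \<open>(2) unions of a Phi-set of subposets in Phi\<close>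
     (\<forall>(A :: 'u set) r (S :: 'u set set).
        is_poset A r \<and> S \<subseteq> Pow A \<and> \<Union>S = A \<and> (\<forall>X\<in>S. in_class Phi X r) \<and>
        in_class Phi S (\<subseteq>) \<longrightarrow> in_class Phi A r) \<and>
     \<comment> \<open>(3) images under monotone maps with cofinal image\<close>
     (\<forall>(A :: 'u set) r (B :: 'u set) s f.
        in_class Phi A r \<and> is_poset B s \<and> monotone_map f A r B s \<and> cofinal (f ` A) B s
        \<longrightarrow> in_class Phi B s) \<and>
     \<comment> \<open>(4) cofinal subposets\<close>
     (\<forall>(A :: 'u set) r C.
        in_class Phi A r \<and> cofinal C A r \<longrightarrow> in_class Phi C r)"

definition lower_set :: "'b set \<Rightarrow> ('b \<Rightarrow> 'b \<Rightarrow> bool) \<Rightarrow> 'b set \<Rightarrow> bool" where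
  "lower_set A r X \<longleftrightarrow> X \<subseteq> A \<and> (\<forall>x\<in>X. \<forall>y\<in>A. r y x \<longrightarrow> y \<in> X)"

definition in_star ::
  "('u set \<times> ('u \<Rightarrow> 'u \<Rightarrow> bool)) set \<Rightarrow> 'b set \<Rightarrow> ('b \<Rightarrow> 'b \<Rightarrow> bool) \<Rightarrow> bool" where
  "in_star Phi A r \<longleftrightarrow> is_poset A r \<and>
     (\<forall>S. (\<forall>X\<in>S. lower_set A r X) \<and> \<Union>S = A \<and> in_class Phi S (\<subseteq>) \<longrightarrow> A \<in> S)"

end

theory Submission
  imports Defs "HOL-Library.Infinite_Set"
begin

lemma iso_comp:
  assumes "order_iso f A r B s" "order_iso g B s C t"
  shows "order_iso (g \<circ> f) A r C t"
proof -
  have "bij_betw (g \<circ> f) A C" using assms unfolding order_iso_def by (metis bij_betw_trans)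
  moreover have "\<forall>x\<in>A. \<forall>y\<in>A. r x y \<longleftrightarrow> t ((g \<circ> f) x) ((g \<circ> f) y)"
    using assms unfolding order_iso_def bij_betw_def by auto
  ultimately show ?thesis unfolding order_iso_def by blast
qed

lemma nat_poset: "is_poset (UNIV :: nat set) (\<le>)"
  unfolding is_poset_def by auto

lemma subset_poset: "is_poset (S :: 'a set set) (\<subseteq>)"
  unfolding is_poset_def by auto

lemma lower_nat:
  assumes "lower_set (UNIV :: nat set) (\<le>) X" "X \<noteq> UNIV"
  shows "X = {..<card X}"
proof -
  obtain m where m: "m \<notin> X" using assms(2) by auto
  have low: "\<And>x y. x \<in> X \<Longrightarrow> y \<le> x \<Longrightarrow> y \<in> X"
    using assms(1) unfolding lower_set_def by auto
  have "X \<subseteq> {..<m}" using m low by (metis lessThan_iff not_le subsetI)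
  hence fin: "finite X" using finite_subset by blast
  define n where "n = (LEAST k. k \<notin> X)"
  have nX: "n \<notin> X" unfolding n_def using m by (rule LeastI)
  have "X = {..<n}"
  proof
    show "X \<subseteq> {..<n}" using nX low by (metis lessThan_iff not_le subsetI)
    show "{..<n} \<subseteq> X" unfolding n_def using not_less_Least by auto
  qed
  thus ?thesis by simp
qed

theorem lemma3p6:
  fixes Phi :: "('u set \<times> ('u \<Rightarrow> 'u \<Rightarrow> bool)) set"
  assumes "join_doctrine Phi"
  shows "in_class Phi (UNIV :: nat set) (\<le>) \<longleftrightarrow> \<not> in_star Phi (UNIV :: nat set) (\<le>)"
proof
  assume "in_class Phi (UNIV :: nat set) (\<le>)"
  then obtain B s f where Bs: "(B, s) \<in> Phi" "is_poset B s" and f: "order_iso f (UNIV :: nat set) (\<le>) B s"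
    unfolding in_class_def by blast
  define S where "S = range (\<lambda>n::nat. {..<n})"
  have iso1: "order_iso card S (\<subseteq>) (UNIV :: nat set) (\<le>)"
    unfolding order_iso_def S_def bij_betw_def inj_on_def
    by (auto simp: image_iff)
  have "in_class Phi S (\<subseteq>)"
    unfolding in_class_def using Bs iso_comp[OF iso1 f] subset_poset by blast
  moreover have "\<forall>X\<in>S. lower_set UNIV (\<le>) X"
    unfolding S_def lower_set_def by auto
  moreover have "\<Union>S = UNIV"
    unfolding S_def by auto
  moreover have "UNIV \<notin> S"
    unfolding S_def by auto
  ultimately show "\<not> in_star Phi (UNIV :: nat set) (\<le>)"
    unfolding in_star_def by blast
next
  assume "\<not> in_star Phi (UNIV :: nat set) (\<le>)"
  then obtain S where low: "\<forall>X\<in>S. lower_set UNIV (\<le>) X" and un: "\<Union>S = (UNIV :: nat set)"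
    and cl: "in_class Phi S (\<subseteq>)" and nU: "UNIV \<notin> S"
    unfolding in_star_def using nat_poset by blast
  then obtain B s f where Bs: "(B, s) \<in> Phi" "is_poset B s" and f: "order_iso f S (\<subseteq>) B s"
    unfolding in_class_def by blast
  have eq: "\<And>X. X \<in> S \<Longrightarrow> X = {..<card X}"
    using low nU lower_nat by metis
  define N where "N = card ` S"
  have infN: "infinite N"
  proof
    assume "finite N"
    hence "\<exists>m. \<forall>n\<in>N. n \<le> m" using finite_nat_set_iff_bounded_le by blast
    then obtain m where m: "\<forall>n\<in>N. n \<le> m" by blast
    obtain X where X: "X \<in> S" "m \<in> X" using un by blast
    hence "m < card X" using eq by (metis lessThan_iff)
    moreover have "card X \<in> N" using X N_def by auto
    ultimately show False using m by force
  qed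
  define h where "h = (\<lambda>k. {..<enumerate N k})"
  have iso0: "order_iso h (UNIV :: nat set) (\<le>) S (\<subseteq>)"
    unfolding order_iso_def
  proof
    have bN: "bij_betw (enumerate N) UNIV N" using bij_enumerate[OF infN] .
    have bS: "bij_betw (\<lambda>n. {..<n}) N S"
      unfolding bij_betw_def inj_on_def N_def
    proof
      show "\<forall>x\<in>card ` S. \<forall>y\<in>card ` S. {..<x} = {..<y} \<longrightarrow> x = y" by auto
      show "(\<lambda>n. {..<n}) ` card ` S = S"
        using eq by (auto simp: image_iff)
    qed
    show "bij_betw h UNIV S" unfolding h_def
      using bij_betw_trans[OF bN bS] by (simp add: comp_def)
    show "\<forall>x\<in>UNIV. \<forall>y\<in>UNIV. x \<le> y \<longleftrightarrow> h x \<subseteq> h y"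
      unfolding h_def using infN by auto
  qed
  show "in_class Phi (UNIV :: nat set) (\<le>)"
    unfolding in_class_def using Bs iso_comp[OF iso0 f] nat_poset by blast
qed

end
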